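(* Let $\mathcal{T}$ be the set of 9-tuples $(G_1,G_2,G_3,V_{1,2},V_{1,3},V_{2,1},V_{2,3},V_{3,1},V_{3,2})$ of monic polynomials satisfying $(V_{i,j},V_{k,l})=1$ whenever both $i\ne k$ and $j\ne l$. Then the map sending such a tuple to $$A_1=G_1V_{1,2}V_{1,3},\ A_2=G_2V_{2,1}V_{2,3},\ A_3=G_3V_{3,1}V_{3,2},\quad B_1=G_1V_{2,1}V_{3,1},\ B_2=G_2V_{1,2}V_{3,2},\ B_3=G_3V_{1,3}V_{2,3}$$ is a bijection from $\mathcal{T}$ onto the set of 6-tuples $(A_1,A_2,A_3,B_1,B_2,B_3)$ of monic polynomials satisfying $A_1A_2A_3=B_1B_2B_3$. (In particular every such 6-tuple arises this way, with $G_i=(A_i,B_i)$.)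
   Context: Polynomials are in $\mathbb{F}_q[T]$ with $q$ a prime power; $(A,B)$ denotes the monic greatest common divisor. *)

theory Defs
  imports "HOL-Computational_Algebra.Polynomial_Factorial"
begin

type_synonym 'a tup9 = "'a poly \<times> 'a poly \<times> 'a poly \<times> 'a poly \<times> 'a poly \<times> 'a poly \<times> 'a poly \<times> 'a poly \<times> 'a poly"
type_synonym 'a tup6 = "'a poly \<times> 'a poly \<times> 'a poly \<times> 'a poly \<times> 'a poly \<times> 'a poly"

definition monic :: "'a::field poly \<Rightarrow> bool" where
  "monic p \<longleftrightarrow> lead_coeff p = 1"

fun Vsel :: "'a tup9 \<Rightarrow> nat \<Rightarrow> nat \<Rightarrow> 'a poly" where
  "Vsel (G1,G2,G3,V12,V13,V21,V23,V31,V32) i j =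
     (if i = 1 \<and> j = 2 then V12 else if i = 1 \<and> j = 3 then V13 else
      if i = 2 \<and> j = 1 then V21 else if i = 2 \<and> j = 3 then V23 else
      if i = 3 \<and> j = 1 then V31 else V32)"

definition Tset :: "'a::{field,factorial_ring_gcd,semiring_gcd_mult_normalize} tup9 set" where
  "Tset = {t. (case t of (G1,G2,G3,V12,V13,V21,V23,V31,V32) \<Rightarrow>
              monic G1 \<and> monic G2 \<and> monic G3 \<and> monic V12 \<and> monic V13 \<and>
              monic V21 \<and> monic V23 \<and> monic V31 \<and> monic V32) \<and>
           (\<forall>i\<in>{1,2,3}. \<forall>j\<in>{1,2,3}. \<forall>k\<in>{1,2,3}. \<forall>l\<in>{1,2,3}.
              i \<noteq> j \<longrightarrow> k \<noteq> l \<longrightarrow> i \<noteq> k \<longrightarrow> j \<noteq> l \<longrightarrow>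
              gcd (Vsel t i j) (Vsel t k l) = 1)}"

definition Sset :: "'a::field tup6 set" where
  "Sset = {(A1,A2,A3,B1,B2,B3). monic A1 \<and> monic A2 \<and> monic A3 \<and>
              monic B1 \<and> monic B2 \<and> monic B3 \<and> A1 * A2 * A3 = B1 * B2 * B3}"

fun tmap :: "'a::field tup9 \<Rightarrow> 'a tup6" where
  "tmap (G1,G2,G3,V12,V13,V21,V23,V31,V32) =
     (G1 * V12 * V13, G2 * V21 * V23, G3 * V31 * V32,
      G1 * V21 * V31, G2 * V12 * V32, G3 * V13 * V23)"

end

theory Submission imports Defs begin

lemma uf_self: "(c::'a::{field,factorial_ring_gcd}) \<noteq> 0 \<Longrightarrow> unit_factor c = c"
proof -
  assume c: "c \<noteq> 0"
  hence "is_unit c" by (metis dvd_field_iff)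
  hence "normalize c = 1" by (rule is_unit_normalize)
  moreover have "unit_factor c * normalize c = c" by (rule unit_factor_mult_normalize)
  ultimately show ?thesis by simp
qed

lemma monic_nz: "monic (p::'a::field poly) \<Longrightarrow> p \<noteq> 0"
  unfolding monic_def by auto

lemma monic_norm: "monic (p::'a::{field,factorial_ring_gcd,semiring_gcd_mult_normalize} poly) \<Longrightarrow> normalize p = p"
  unfolding monic_def normalize_poly_def by (simp add: one_pCons[symmetric])

lemma lc_norm: "(g::'a::{field,factorial_ring_gcd,semiring_gcd_mult_normalize} poly) \<noteq> 0 \<Longrightarrow> lead_coeff (normalize g) = 1"
proof -
  assume g: "g \<noteq> 0"
  have "normalize g = smult (inverse (lead_coeff g)) g"
    using g by (simp add: normalize_poly_eq_map_poly uf_self smult_conv_map_poly divide_inverse mult.commute)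
  then show ?thesis using g by simp
qed

lemma monic_mult: "monic (p::'a::field poly) \<Longrightarrow> monic q \<Longrightarrow> monic (p*q)"
  unfolding monic_def by (simp add: lead_coeff_mult)

lemma monic_gcd: "monic (p::'a::{field,factorial_ring_gcd,semiring_gcd_mult_normalize} poly) \<Longrightarrow> monic (gcd p q)"
proof -
  assume "monic p"
  hence nz: "gcd p q \<noteq> 0" using monic_nz by auto
  show ?thesis unfolding monic_def using lc_norm[OF nz] by simp
qed

lemma monic_eq: "monic (x::'a::{field,factorial_ring_gcd,semiring_gcd_mult_normalize} poly) \<Longrightarrow> monic y \<Longrightarrow>
   (\<And>p. prime p \<Longrightarrow> multiplicity p x = multiplicity p y) \<Longrightarrow> x = y"
  by (metis monic_norm monic_nz multiplicity_eq_imp_eq)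

lemma mm: "prime p \<Longrightarrow> monic (x::'a::{field,factorial_ring_gcd,semiring_gcd_mult_normalize} poly) \<Longrightarrow> monic y \<Longrightarrow>
   multiplicity p (x*y) = multiplicity p x + multiplicity p y"
  by (simp add: monic_nz prime_elem_multiplicity_mult_distrib)

lemma mg: "prime p \<Longrightarrow> monic (x::'a::{field,factorial_ring_gcd,semiring_gcd_mult_normalize} poly) \<Longrightarrow> monic y \<Longrightarrow>
   multiplicity p (gcd x y) = min (multiplicity p x) (multiplicity p y)"
  by (simp add: monic_nz multiplicity_gcd)

lemma mcop: "prime p \<Longrightarrow> monic (x::'a::{field,factorial_ring_gcd,semiring_gcd_mult_normalize} poly) \<Longrightarrow> monic y \<Longrightarrow> gcd x y = 1 \<Longrightarrow>
   min (multiplicity p x) (multiplicity p y) = 0"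
  by (metis mg multiplicity_one)

lemma cop_of: "monic (x::'a::{field,factorial_ring_gcd,semiring_gcd_mult_normalize} poly) \<Longrightarrow> monic y \<Longrightarrow>
   (\<And>p. prime p \<Longrightarrow> min (multiplicity p x) (multiplicity p y) = 0) \<Longrightarrow> gcd x y = 1"
  apply (rule monic_eq)
    apply (simp add: monic_gcd)
   apply (simp add: monic_def)
  by (simp add: mg multiplicity_one)

lemma arith6:
  fixes al1 al2 al3 be1 be2 be3 g1 g2 g3 a1 a2 a3 b1 b2 b3 :: nat
  assumes "g1 = min al1 be1" "g2 = min al2 be2" "g3 = min al3 be3"
    "al1 = g1 + a1" "al2 = g2 + a2" "al3 = g3 + a3"
    "be1 = g1 + b1" "be2 = g2 + b2" "be3 = g3 + b3"
    "al1 + al2 + al3 = be1 + be2 + be3"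
  shows "al1 = g1 + min a1 b2 + min a1 b3" "al2 = g2 + min a2 b1 + min a2 b3"
    "al3 = g3 + min a3 b1 + min a3 b2"
    "be1 = g1 + min a2 b1 + min a3 b1" "be2 = g2 + min a1 b2 + min a3 b2"
    "be3 = g3 + min a1 b3 + min a2 b3"
    "min a1 b1 = 0" "min a2 b2 = 0" "min a3 b3 = 0"
  using assms by (simp_all add: min_def split: if_splits; arith)+

lemma Tset_iff:
  "((G1,G2,G3,V12,V13,V21,V23,V31,V32) :: 'a::{field,factorial_ring_gcd,semiring_gcd_mult_normalize} tup9) \<in> Tset \<longleftrightarrow>
   (monic G1 \<and> monic G2 \<and> monic G3 \<and> monic V12 \<and> monic V13 \<and>
              monic V21 \<and> monic V23 \<and> monic V31 \<and> monic V32) \<and>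
   gcd V12 V21 = 1 \<and> gcd V12 V23 = 1 \<and> gcd V12 V31 = 1 \<and>
   gcd V13 V21 = 1 \<and> gcd V13 V31 = 1 \<and> gcd V13 V32 = 1 \<and>
   gcd V21 V32 = 1 \<and> gcd V23 V31 = 1 \<and> gcd V23 V32 = 1"
  unfolding Tset_def by (auto simp: gcd.commute)

definition inv6 :: "'a::{field,factorial_ring_gcd,semiring_gcd_mult_normalize} tup6 \<Rightarrow> 'a tup9" where
  "inv6 s = (case s of (A1,A2,A3,B1,B2,B3) \<Rightarrow>
     (gcd A1 B1, gcd A2 B2, gcd A3 B3,
      gcd (A1 div gcd A1 B1) (B2 div gcd A2 B2), gcd (A1 div gcd A1 B1) (B3 div gcd A3 B3),
      gcd (A2 div gcd A2 B2) (B1 div gcd A1 B1), gcd (A2 div gcd A2 B2) (B3 div gcd A3 B3),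
      gcd (A3 div gcd A3 B3) (B1 div gcd A1 B1), gcd (A3 div gcd A3 B3) (B2 div gcd A2 B2)))"

lemma part1:
  assumes "((G1,G2,G3,V12,V13,V21,V23,V31,V32) :: 'a::{field,factorial_ring_gcd,semiring_gcd_mult_normalize} tup9) \<in> Tset"
  shows "gcd (G1 * V12 * V13) (G1 * V21 * V31) = G1 \<and>
       gcd (G2 * V21 * V23) (G2 * V12 * V32) = G2 \<and>
       gcd (G3 * V31 * V32) (G3 * V13 * V23) = G3 \<and>
       gcd (V12 * V13) (V12 * V32) = V12 \<and> gcd (V12 * V13) (V13 * V23) = V13 \<and>
       gcd (V21 * V23) (V21 * V31) = V21 \<and> gcd (V21 * V23) (V13 * V23) = V23 \<and>
       gcd (V31 * V32) (V21 * V31) = V31 \<and> gcd (V31 * V32) (V12 * V32) = V32"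
proof -
  note h = assms[unfolded Tset_iff]
  have mons: "monic G1" "monic G2" "monic G3" "monic V12" "monic V13" "monic V21"
     "monic V23" "monic V31" "monic V32" using h by auto
  note mons2 = mons monic_mult[OF monic_mult] monic_mult monic_gcd
  have c: "min (multiplicity p V12) (multiplicity p V21) = 0 \<and>
     min (multiplicity p V12) (multiplicity p V23) = 0 \<and>
     min (multiplicity p V12) (multiplicity p V31) = 0 \<and>
     min (multiplicity p V13) (multiplicity p V21) = 0 \<and>
     min (multiplicity p V13) (multiplicity p V31) = 0 \<and>
     min (multiplicity p V13) (multiplicity p V32) = 0 \<and>
     min (multiplicity p V21) (multiplicity p V32) = 0 \<and>
     min (multiplicity p V23) (multiplicity p V31) = 0 \<and>
     min (multiplicity p V23) (multiplicity p V32) = 0" if "prime p" for p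
    using h mcop[OF that] by auto
  have ar1: "min (g+a+b) (g+c+d) = g" if "min a c = 0" "min a d = 0" "min b c = 0" "min b d = 0"
    for g a b c d :: nat using that by (simp add: min_def split: if_splits)
  have ar2: "min (a+b) (a+c) = a" if "min b c = 0" for a b c :: nat
    using that by (simp add: min_def split: if_splits)
  have ar3: "min (a+b) (b+c) = b" if "min a c = 0" for a b c :: nat
    using that by (simp add: min_def split: if_splits)
  have ar4: "min (a+b) (c+a) = a" if "min b c = 0" for a b c :: nat
    using that by (simp add: min_def split: if_splits)
  have ar5: "min (a+b) (c+b) = b" if "min a c = 0" for a b c :: nat
    using that by (simp add: min_def split: if_splits)
  have ar6: "min (a+b) (b+c) = b" if "min c a = 0" for a b c :: nat
    using that by (simp add: min_def split: if_splits)
  note ar = ar1 ar2 ar3 ar4 ar5 ar6 min.commute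
  show ?thesis
    apply (intro conjI; rule monic_eq)
    apply (simp_all add: mons2 mm mg)
    subgoal for p using c[of p] by (intro ar1) (simp_all add: min.commute)
    subgoal for p using c[of p] by (intro ar1) (simp_all add: min.commute)
    subgoal for p using c[of p] by (intro ar1) (simp_all add: min.commute)
    subgoal for p using c[of p] by (intro ar2) (simp_all add: min.commute)
    subgoal for p using c[of p] by (intro ar3) (simp_all add: min.commute)
    subgoal for p using c[of p] by (intro ar2) (simp_all add: min.commute)
    subgoal for p using c[of p] by (intro ar5) (simp_all add: min.commute)
    subgoal for p using c[of p] by (intro ar4) (simp_all add: min.commute)
    subgoal for p using c[of p] by (intro ar5) (simp_all add: min.commute)
    done
qed

lemma part1b:
  fixes t :: "'a::{field,factorial_ring_gcd,semiring_gcd_mult_normalize} tup9"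
  assumes t: "t = (G1,G2,G3,V12,V13,V21,V23,V31,V32)" and "t \<in> Tset" shows "inv6 (tmap t) = t" "tmap t \<in> Sset"
proof -
  note a = assms(2)[unfolded t]
  have mons: "monic G1" "monic G2" "monic G3" "monic V12" "monic V13" "monic V21"
     "monic V23" "monic V31" "monic V32" using a[unfolded Tset_iff] by auto
  then have nz: "G1 \<noteq> 0" "G2 \<noteq> 0" "G3 \<noteq> 0" using monic_nz by auto
  have d: "G1*V12*V13 div G1 = V12*V13" "G1*V21*V31 div G1 = V21*V31"
    "G2*V21*V23 div G2 = V21*V23" "G2*V12*V32 div G2 = V12*V32"
    "G3*V31*V32 div G3 = V31*V32" "G3*V13*V23 div G3 = V13*V23"
    using nz by (simp_all add: mult.assoc)
  note p1 = part1[OF a]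
  show "inv6 (tmap t) = t"
    unfolding t inv6_def tmap.simps prod.case p1[THEN conjunct1] p1[THEN conjunct2, THEN conjunct1]
     p1[THEN conjunct2, THEN conjunct2, THEN conjunct1] d
    using p1 by simp
  have e: "G1*V12*V13 * (G2*V21*V23) * (G3*V31*V32) = G1*V21*V31 * (G2*V12*V32) * (G3*V13*V23)"
    by (simp only: mult.assoc mult.commute mult.left_commute)
  show "tmap t \<in> Sset"
    unfolding t Sset_def tmap.simps using mons e by (simp add: monic_mult)
qed

lemma monic_cancel: "monic (G::'a::field poly) \<Longrightarrow> monic (G*a) \<Longrightarrow> monic a"
  unfolding monic_def by (simp add: lead_coeff_mult)

lemma part2:
  fixes s :: "'a::{field,factorial_ring_gcd,semiring_gcd_mult_normalize} tup6"
  assumes s: "s = (A1,A2,A3,B1,B2,B3)" and "s \<in> Sset"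
  shows "inv6 s \<in> Tset" "tmap (inv6 s) = s"
proof -
  have mA: "monic A1" "monic A2" "monic A3" "monic B1" "monic B2" "monic B3"
    and eq: "A1 * A2 * A3 = B1 * B2 * B3" using assms(2) unfolding s Sset_def by auto
  define G1 where "G1 = gcd A1 B1"
  define G2 where "G2 = gcd A2 B2"
  define G3 where "G3 = gcd A3 B3"
  define a1 where "a1 = A1 div G1"
  define a2 where "a2 = A2 div G2"
  define a3 where "a3 = A3 div G3"
  define b1 where "b1 = B1 div G1"
  define b2 where "b2 = B2 div G2"
  define b3 where "b3 = B3 div G3"
  have inv: "inv6 s = (G1,G2,G3,gcd a1 b2, gcd a1 b3, gcd a2 b1, gcd a2 b3, gcd a3 b1, gcd a3 b2)"
    unfolding s inv6_def G1_def G2_def G3_def a1_def a2_def a3_def b1_def b2_def b3_def by simp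
  have mG: "monic G1" "monic G2" "monic G3"
    unfolding G1_def G2_def G3_def using mA by (simp_all add: monic_gcd)
  have fA: "A1 = G1 * a1" "A2 = G2 * a2" "A3 = G3 * a3" "B1 = G1 * b1" "B2 = G2 * b2" "B3 = G3 * b3"
    unfolding G1_def G2_def G3_def a1_def a2_def a3_def b1_def b2_def b3_def
    by (simp_all add: dvd_mult_div_cancel)
  have ma: "monic a1" "monic a2" "monic a3" "monic b1" "monic b2" "monic b3"
    using mA mG fA monic_cancel by metis+
  note monics = mA mG ma monic_gcd monic_mult
  have key: "multiplicity p A1 = multiplicity p G1 + min (multiplicity p a1) (multiplicity p b2) + min (multiplicity p a1) (multiplicity p b3) \<and>
     multiplicity p A2 = multiplicity p G2 + min (multiplicity p a2) (multiplicity p b1) + min (multiplicity p a2) (multiplicity p b3) \<and>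
     multiplicity p A3 = multiplicity p G3 + min (multiplicity p a3) (multiplicity p b1) + min (multiplicity p a3) (multiplicity p b2) \<and>
     multiplicity p B1 = multiplicity p G1 + min (multiplicity p a2) (multiplicity p b1) + min (multiplicity p a3) (multiplicity p b1) \<and>
     multiplicity p B2 = multiplicity p G2 + min (multiplicity p a1) (multiplicity p b2) + min (multiplicity p a3) (multiplicity p b2) \<and>
     multiplicity p B3 = multiplicity p G3 + min (multiplicity p a1) (multiplicity p b3) + min (multiplicity p a2) (multiplicity p b3) \<and>
     min (multiplicity p a1) (multiplicity p b1) = 0 \<and> min (multiplicity p a2) (multiplicity p b2) = 0 \<and>
     min (multiplicity p a3) (multiplicity p b3) = 0" if p: "prime p" for p
  proof -
    have h1: "multiplicity p G1 = min (multiplicity p A1) (multiplicity p B1)"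
      "multiplicity p G2 = min (multiplicity p A2) (multiplicity p B2)"
      "multiplicity p G3 = min (multiplicity p A3) (multiplicity p B3)"
      unfolding G1_def G2_def G3_def using p mA by (simp_all add: mg)
    have h2: "multiplicity p A1 = multiplicity p G1 + multiplicity p a1"
      "multiplicity p A2 = multiplicity p G2 + multiplicity p a2"
      "multiplicity p A3 = multiplicity p G3 + multiplicity p a3"
      "multiplicity p B1 = multiplicity p G1 + multiplicity p b1"
      "multiplicity p B2 = multiplicity p G2 + multiplicity p b2"
      "multiplicity p B3 = multiplicity p G3 + multiplicity p b3"
      using p mG ma by (subst fA; simp add: mm)+
    have h3: "multiplicity p A1 + multiplicity p A2 + multiplicity p A3 =
       multiplicity p B1 + multiplicity p B2 + multiplicity p B3"
      using arg_cong[OF eq, of "multiplicity p"] p mA by (simp add: mm monic_mult)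
    show ?thesis using arith6[OF h1 h2 h3] by simp
  qed
  show "tmap (inv6 s) = s"
    unfolding inv tmap.simps unfolding s
    apply (simp only: prod.inject)
    apply (intro conjI; rule monic_eq)
    apply (simp_all add: monics)
    apply (simp_all add: mm monics mg key)
    done
  show "inv6 s \<in> Tset"
    unfolding inv Tset_iff
    apply (intro conjI)
    apply (simp_all add: monics)
    apply (rule cop_of; simp add: monics mg; drule key; simp add: min_def split: if_splits)+
    done
qed

theorem lemma7p3:
  shows "bij_betw (tmap :: ('a::{field,factorial_ring_gcd,semiring_gcd_mult_normalize,finite}) tup9 \<Rightarrow> 'a tup6) Tset Sset \<and>
    (\<forall>G1 G2 G3 V12 V13 V21 V23 V31 V32.
       ((G1,G2,G3,V12,V13,V21,V23,V31,V32) :: 'a tup9) \<in> Tset \<longrightarrow>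
       gcd (G1 * V12 * V13) (G1 * V21 * V31) = G1 \<and>
       gcd (G2 * V21 * V23) (G2 * V12 * V32) = G2 \<and>
       gcd (G3 * V31 * V32) (G3 * V13 * V23) = G3)"
proof
  have t9: "t = (fst t, fst (snd t), fst (snd (snd t)), fst (snd (snd (snd t))), fst (snd (snd (snd (snd t)))), fst (snd (snd (snd (snd (snd t))))), fst (snd (snd (snd (snd (snd (snd t)))))), fst (snd (snd (snd (snd (snd (snd (snd t))))))), snd (snd (snd (snd (snd (snd (snd (snd t))))))))" for t :: "'a tup9" by simp
  have s6: "s = (fst s, fst (snd s), fst (snd (snd s)), fst (snd (snd (snd s))), fst (snd (snd (snd (snd s)))), snd (snd (snd (snd (snd s)))))" for s :: "'a tup6" by simp
  show "bij_betw (tmap :: 'a tup9 \<Rightarrow> 'a tup6) Tset Sset"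
  proof (rule bij_betw_byWitness[where f' = inv6])
    show "\<forall>a\<in>Tset. inv6 (tmap a) = (a :: 'a tup9)" using part1b(1)[OF t9] by blast
    show "\<forall>a'\<in>Sset. tmap (inv6 a') = (a' :: 'a tup6)" using part2(2)[OF s6] by blast
    show "tmap ` Tset \<subseteq> (Sset :: 'a tup6 set)" using part1b(2)[OF t9] by blast
    show "inv6 ` Sset \<subseteq> (Tset :: 'a tup9 set)" using part2(1)[OF s6] by blast
  qed
  show "\<forall>G1 G2 G3 V12 V13 V21 V23 V31 V32.
       ((G1,G2,G3,V12,V13,V21,V23,V31,V32) :: 'a tup9) \<in> Tset \<longrightarrow>
       gcd (G1 * V12 * V13) (G1 * V21 * V31) = G1 \<and>
       gcd (G2 * V21 * V23) (G2 * V12 * V32) = G2 \<and>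
       gcd (G3 * V31 * V32) (G3 * V13 * V23) = G3"
    using part1 by blast
qed
end
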